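(* Let $w,h\ge 1$ and $G=P_w(U)\sqcap P_h$. (1) If $U=\{1\}$ or $U=\{w\}$, then $Z(G)\le \lceil h/2\rceil$. (2) If $U=\{i\}$ with $1<i<w$, then $Z(G)\le h$.
   Context: All graphs are finite, simple and undirected. Zero forcing: given a graph $G$ and a set $S\subseteq V(G)$ of initially filled vertices, the color change rule says that if a filled vertex $v$ has exactly one unfilled neighbor $u$, then $v$ forces $u$ to become filled. $S$ is a zero forcing set if repeatedly applying this rule eventually fills every vertex of $G$. The zero forcing number $Z(G)$ is the minimum cardinality of a zero forcing set of $G$. The path $P_n$ has vertex set $\{1,\dots,n\}$ and edges $\{k,k+1\}$ for $1\le k\le n-1$. Generalized hierarchical product: for graphs $W,H$ and $U\subseteq V(W)$ (the root set), $W(U)\sqcap H$ is the graph with vertex set $V(W)\times V(H)$ in which $(x_1,y_1)$ and $(x_2,y_2)$ are adjacent iff either ($x_1=x_2\in U$ and $y_1y_2\in E(H)$) or ($y_1=y_2$ and $x_1x_2\in E(W)$). *)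

theory Defs
  imports Complex_Main
begin

text \<open>A finite simple graph is given by a vertex set V and a symmetric,
irreflexive adjacency relation E (only its restriction to V matters).\<close>

text \<open>Vertices filled by repeatedly applying the colour change rule starting from S:
a filled vertex v forces u if u is the only neighbour of v that is not filled.
(The final set of filled vertices does not depend on the order of forces.)\<close>

inductive filled :: "'a set \<Rightarrow> ('a \<Rightarrow> 'a \<Rightarrow> bool) \<Rightarrow> 'a set \<Rightarrow> 'a \<Rightarrow> bool"
  for V E S where
  init: "v \<in> S \<Longrightarrow> filled V E S v"
| force: "\<lbrakk> filled V E S v; v \<in> V; u \<in> V; E v u;
            \<forall>x. x \<in> V \<and> E v x \<and> x \<noteq> u \<longrightarrow> filled V E S x \<rbrakk>
          \<Longrightarrow> filled V E S u"

definition zero_forcing_set :: "'a set \<Rightarrow> ('a \<Rightarrow> 'a \<Rightarrow> bool) \<Rightarrow> 'a set \<Rightarrow> bool" where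
  "zero_forcing_set V E S \<longleftrightarrow> S \<subseteq> V \<and> (\<forall>v\<in>V. filled V E S v)"

definition zero_forcing_number :: "'a set \<Rightarrow> ('a \<Rightarrow> 'a \<Rightarrow> bool) \<Rightarrow> nat" where
  "zero_forcing_number V E = (LEAST k. \<exists>S. zero_forcing_set V E S \<and> card S = k)"

definition path_V :: "nat \<Rightarrow> nat set" where
  "path_V n = {1..n}"

definition path_E :: "nat \<Rightarrow> nat \<Rightarrow> bool" where
  "path_E a b \<longleftrightarrow> b = a + 1 \<or> a = b + 1"

definition hprod_V :: "'a set \<Rightarrow> 'b set \<Rightarrow> ('a \<times> 'b) set" where
  "hprod_V VW VH = VW \<times> VH"

definition hprod_E :: "('a \<Rightarrow> 'a \<Rightarrow> bool) \<Rightarrow> 'a set \<Rightarrow> ('b \<Rightarrow> 'b \<Rightarrow> bool)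
    \<Rightarrow> ('a \<times> 'b) \<Rightarrow> ('a \<times> 'b) \<Rightarrow> bool" where
  "hprod_E EW U EH p q \<longleftrightarrow>
     (fst p = fst q \<and> fst p \<in> U \<and> EH (snd p) (snd q)) \<or>
     (snd p = snd q \<and> EW (fst p) (fst q))"

end

theory Submission
  imports Defs
begin

lemma E_iff: "hprod_E path_E U path_E (a,b) (c,d) \<longleftrightarrow>
   (a = c \<and> a \<in> U \<and> (d = b+1 \<or> b = d+1)) \<or> (b = d \<and> (c = a+1 \<or> a = c+1))"
  by (auto simp: hprod_E_def path_E_def)

lemma force': "filled V E S v \<Longrightarrow> v \<in> V \<Longrightarrow> u \<in> V \<Longrightarrow> E v u \<Longrightarrow>
   (\<And>x. x \<in> V \<Longrightarrow> E v x \<Longrightarrow> x \<noteq> u \<Longrightarrow> filled V E S x) \<Longrightarrow> filled V E S u"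
  by (rule filled.force) auto

lemma zfn_le: "zero_forcing_set V E S \<Longrightarrow> zero_forcing_number V E \<le> card S"
  unfolding zero_forcing_number_def by (rule Least_le) auto

lemma transfer:
  assumes "filled V E S v" "v \<in> V" and "g ` V = V'"
    and "\<And>a b. a\<in>V \<Longrightarrow> b\<in>V \<Longrightarrow> E' (g a) (g b) = E a b"
  shows "filled V' E' (g`S) (g v)"
  using assms(1,2)
proof (induction rule: filled.induct)
  case (init v)
  then show ?case by (auto intro: filled.init)
next
  case (force v u)
  show ?case
  proof (rule force'[where v="g v"])
    show "filled V' E' (g ` S) (g v)" using force by auto
    show "g v \<in> V'" "g u \<in> V'" using force assms(3) by auto
    show "E' (g v) (g u)" using force assms(4) by auto
    fix p assume p: "p \<in> V'" "E' (g v) p" "p \<noteq> g u"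
    then obtain x where x: "x \<in> V" "p = g x" using assms(3) by auto
    then have "E v x" "x \<noteq> u" using p assms(4) force by auto
    then show "filled V' E' (g ` S) p" using force x by auto
  qed
qed

lemma col:
  assumes "1 \<le> x" "x \<le> w" "1 \<le> y" "y \<le> h"
  shows "filled ({1..w}\<times>{1..h}) (hprod_E path_E U path_E) ({1}\<times>{1..h}) (x,y)"
proof -
  have "\<forall>x y. 1\<le>x \<and> x\<le>k \<and> x\<le>w \<and> 1\<le>y \<and> y\<le>h \<longrightarrow>
     filled ({1..w}\<times>{1..h}) (hprod_E path_E U path_E) ({1}\<times>{1..h}) (x,y)" for k
  proof (induction k)
    case 0 show ?case by simp
  next
    case (Suc k)
    show ?case
    proof (intro allI impI)
      fix x y assume H: "1 \<le> x \<and> x \<le> Suc k \<and> x \<le> w \<and> 1 \<le> y \<and> y \<le> h"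
      show "filled ({1..w}\<times>{1..h}) (hprod_E path_E U path_E) ({1}\<times>{1..h}) (x,y)"
      proof (cases "x \<le> k")
        case True with Suc.IH H show ?thesis by blast
      next
        case False then have x: "x = Suc k" using H by simp
        show ?thesis
        proof (cases "k = 0")
          case True then show ?thesis using x H by (auto intro: filled.init)
        next
          case False
          show ?thesis
          proof (rule force'[where v="(k,y)"])
            show "filled ({1..w}\<times>{1..h}) (hprod_E path_E U path_E) ({1}\<times>{1..h}) (k,y)"
              using Suc.IH H x False by auto
            show "(k,y) \<in> {1..w}\<times>{1..h}" "(x,y) \<in> {1..w}\<times>{1..h}" using H x False by auto
            show "hprod_E path_E U path_E (k,y) (x,y)" using x by (simp add: E_iff)
            fix p assume "p \<in> {1..w}\<times>{1..h}" "hprod_E path_E U path_E (k, y) p" "p \<noteq> (x, y)"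
            then show "filled ({1..w}\<times>{1..h}) (hprod_E path_E U path_E) ({1}\<times>{1..h}) p"
              using Suc.IH x by (cases p) (auto simp: E_iff)
          qed
        qed
      qed
    qed
  qed
  then show ?thesis using assms by blast
qed

lemma comb_rowodd:
  assumes w: "1 \<le> w" and y: "odd y" "1 \<le> y" "y \<le> h" and x: "1 \<le> x" "x \<le> w"
  shows "filled ({1..w}\<times>{1..h}) (hprod_E path_E {1} path_E) {(w,y)|y. y\<in>{1..h} \<and> odd y} (x,y)"
proof -
  let ?F = "filled ({1..w}\<times>{1..h}) (hprod_E path_E {1} path_E) {(w,y)|y. y\<in>{1..h} \<and> odd y}"
  have "\<forall>x. w - n \<le> x \<and> 1 \<le> x \<and> x \<le> w \<longrightarrow> ?F (x,y)" for n
  proof (induction n)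
    case 0
    show ?case using y by (auto intro: filled.init)
  next
    case (Suc n)
    show ?case
    proof (intro allI impI)
      fix x assume H: "w - Suc n \<le> x \<and> 1 \<le> x \<and> x \<le> w"
      show "?F (x,y)"
      proof (cases "w - n \<le> x")
        case True then show ?thesis using Suc.IH H by blast
      next
        case False
        then have xe: "x + 1 = w - n" "x \<ge> 1" using H by auto
        show ?thesis
        proof (rule force'[where v="(x+1,y)"])
          show "?F (x+1,y)" using Suc.IH xe by auto
          show "(x+1,y) \<in> {1..w}\<times>{1..h}" "(x,y) \<in> {1..w}\<times>{1..h}" using xe y by auto
          show "hprod_E path_E {1} path_E (x+1,y) (x,y)" by (simp add: E_iff)
          fix p assume "p \<in> {1..w}\<times>{1..h}" "hprod_E path_E {1} path_E (x+1, y) p" "p \<noteq> (x, y)"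
          then show "?F p" using Suc.IH xe by (cases p) (auto simp: E_iff)
        qed
      qed
    qed
  qed
  from this[of w] show ?thesis using x by auto
qed

lemma comb_all:
  assumes w: "1 \<le> w" and p: "p \<in> {1..w}\<times>{1..h}"
  shows "filled ({1..w}\<times>{1..h}) (hprod_E path_E {1} path_E) {(w,y)|y. y\<in>{1..h} \<and> odd y} p"
proof -
  let ?V = "{1..w}\<times>{1..h}"
  let ?E = "hprod_E path_E {1} path_E"
  let ?F = "filled ?V ?E {(w,y)|y. y\<in>{1..h} \<and> odd y}"
  have A: "?F (x,y)" if "odd y" "1 \<le> y" "y \<le> h" "1 \<le> x" "x \<le> w" for x y
    using comb_rowodd[OF w that] .
  have "\<forall>y'. 1 \<le> y' \<and> y' \<le> y \<and> y' \<le> h \<longrightarrow> (\<forall>x. 1\<le>x \<and> x\<le>w \<longrightarrow> ?F (x,y'))" for y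
  proof (induction y)
    case 0 show ?case by simp
  next
    case (Suc y)
    show ?case
    proof (intro allI impI)
      fix y' x assume H: "1 \<le> y' \<and> y' \<le> Suc y \<and> y' \<le> h" and X: "1\<le>x \<and> x\<le>w"
      show "?F (x,y')"
      proof (cases "y' \<le> y")
        case True then show ?thesis using Suc.IH H X by blast
      next
        case False
        then have yy: "y' = Suc y" using H by auto
        show ?thesis
        proof (cases "odd y'")
          case True then show ?thesis using A H X by blast
        next
          case False
          then have oy: "odd y" "y \<ge> 1" using yy by (auto, presburger)
          have IH: "?F (a,b)" if "1 \<le> b" "b \<le> y" "1 \<le> a" "a \<le> w" for a b
            using Suc.IH that H yy by auto
          have c1: "?F (1, Suc y)"
          proof (rule force'[where v="(1,y)"])
            show "?F (1,y)" using IH oy w by auto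
            show "(1,y) \<in> ?V" "(1,Suc y) \<in> ?V" using oy w H yy by auto
            show "?E (1,y) (1,Suc y)" by (simp add: E_iff)
            fix p assume "p \<in> ?V" "?E (1, y) p" "p \<noteq> (1, Suc y)"
            then show "?F p" using IH by (cases p) (auto simp: E_iff)
          qed
          have "\<forall>x. 1 \<le> x \<and> x \<le> k \<and> x \<le> w \<longrightarrow> ?F (x, Suc y)" for k
          proof (induction k)
            case 0 show ?case by simp
          next
            case (Suc k)
            show ?case
            proof (intro allI impI)
              fix x assume Hx: "1 \<le> x \<and> x \<le> Suc k \<and> x \<le> w"
              show "?F (x, Suc y)"
              proof (cases "x \<le> k")
                case True then show ?thesis using Suc.IH Hx by blast
              next
                case False
                then have xk: "x = Suc k" using Hx by auto
                show ?thesis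
                proof (cases "k = 0")
                  case True then show ?thesis using xk c1 by simp
                next
                  case False
                  show ?thesis
                  proof (rule force'[where v="(k,Suc y)"])
                    show "?F (k,Suc y)" using Suc.IH False Hx xk by auto
                    show "(k,Suc y) \<in> ?V" "(x,Suc y) \<in> ?V" using H yy Hx xk False by auto
                    show "?E (k,Suc y) (x,Suc y)" using xk by (simp add: E_iff)
                    fix p assume pp: "p \<in> ?V" "?E (k, Suc y) p" "p \<noteq> (x, Suc y)"
                    obtain a b where pab: "p = (a,b)" by (cases p)
                    show "?F p"
                    proof (cases "b = Suc y")
                      case True
                      then have "a = k - 1" "k \<ge> 2" using pp pab xk False by (auto simp: E_iff)
                      then show ?thesis using Suc.IH pab True pp by auto
                    next
                      case bne: False
                      then have "k = 1" "a = 1" "b = y \<or> b = Suc (Suc y)" using pp pab by (auto simp: E_iff)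
                      then show ?thesis using IH A oy pp pab w by auto
                    qed
                  qed
                qed
              qed
            qed
          qed
          then show ?thesis using X yy by auto
        qed
      qed
    qed
  qed
  then show ?thesis using p by auto
qed

lemma card_odd: "card {y\<in>{1..h}. odd y} = (h+1) div 2"
proof (induction h)
  case 0 then show ?case by simp
next
  case (Suc h)
  show ?case
  proof (cases "odd (Suc h)")
    case True
    then have e: "{y\<in>{1..Suc h}. odd y} = insert (Suc h) {y\<in>{1..h}. odd y}" by auto
    have "card {y\<in>{1..Suc h}. odd y} = Suc ((h+1) div 2)" unfolding e using Suc by simp
    then show ?thesis using True by presburger
  next
    case False
    then have e: "{y\<in>{1..Suc h}. odd y} = {y\<in>{1..h}. odd y}" using le_Suc_eq by auto
    show ?thesis unfolding e using Suc False by presburger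
  qed
qed

lemma half_le: "((h::nat)+1) div 2 \<le> nat \<lceil>real h / 2\<rceil>"
proof -
  have "real h / 2 \<le> of_int \<lceil>real h / 2\<rceil>" by (rule le_of_int_ceiling)
  then have "real h \<le> 2 * of_int \<lceil>real h / 2\<rceil>" by linarith
  then have "real_of_int (int h) \<le> real_of_int (2 * \<lceil>real h / 2\<rceil>)" by simp
  then have "int h \<le> 2 * \<lceil>real h / 2\<rceil>" by (simp only: of_int_le_iff)
  then show ?thesis by linarith
qed

lemma cardS: "card {(w::nat,y)|y. y\<in>{1..h} \<and> odd y} \<le> nat \<lceil>real h / 2\<rceil>"
proof -
  have "{(w::nat,y)|y. y\<in>{1..h} \<and> odd y} = (\<lambda>y. (w,y)) ` {y\<in>{1..h}. odd y}" by auto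
  then have "card {(w::nat,y)|y. y\<in>{1..h} \<and> odd y} \<le> card {y\<in>{1..h}. odd y}"
    by (simp add: card_image_le)
  then show ?thesis using card_odd[of h] half_le[of h] by linarith
qed

theorem mainTheorem1:
  fixes w h :: nat
  assumes "w \<ge> 1" and "h \<ge> 1"
  shows "(\<forall>U. (U = {1} \<or> U = {w}) \<longrightarrow>
            zero_forcing_number (hprod_V (path_V w) (path_V h)) (hprod_E path_E U path_E)
              \<le> nat \<lceil>real h / 2\<rceil>)
       \<and> (\<forall>i. 1 < i \<and> i < w \<longrightarrow>
            zero_forcing_number (hprod_V (path_V w) (path_V h)) (hprod_E path_E {i} path_E)
              \<le> h)"
proof -
  have VV: "hprod_V (path_V w) (path_V h) = {1..w}\<times>{1..h}" by (simp add: hprod_V_def path_V_def)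
  let ?S = "{(w,y)|y. y\<in>{1..h} \<and> odd y}"
  have z1: "zero_forcing_set ({1..w}\<times>{1..h}) (hprod_E path_E {1} path_E) ?S"
    unfolding zero_forcing_set_def using comb_all[OF assms(1)] assms(1) by auto
  define g where "g = (\<lambda>(x::nat,y::nat). (w+1-x, y))"
  have gV: "g ` ({1..w}\<times>{1..h}) = {1..w}\<times>{1..h}"
  proof
    show "g ` ({1..w}\<times>{1..h}) \<subseteq> {1..w}\<times>{1..h}" by (auto simp: g_def)
    show "{1..w}\<times>{1..h} \<subseteq> g ` ({1..w}\<times>{1..h})"
    proof
      fix p assume p: "p \<in> {1..w}\<times>{1..h}"
      obtain x y where "p = (x,y)" by (cases p)
      then have "p = g (w+1-x, y)" "(w+1-x,y) \<in> {1..w}\<times>{1..h}" using p by (auto simp: g_def)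
      then show "p \<in> g ` ({1..w}\<times>{1..h})" by blast
    qed
  qed
  have gE: "hprod_E path_E {w} path_E (g a) (g b) = hprod_E path_E {1} path_E a b"
    if "a \<in> {1..w}\<times>{1..h}" "b \<in> {1..w}\<times>{1..h}" for a b
  proof -
    obtain a1 a2 b1 b2 where ab: "a = (a1,a2)" "b = (b1,b2)" by (cases a, cases b)
    show ?thesis using that unfolding ab g_def by (simp only: case_prod_conv E_iff) auto
  qed
  have z2: "zero_forcing_set ({1..w}\<times>{1..h}) (hprod_E path_E {w} path_E) (g ` ?S)"
    unfolding zero_forcing_set_def
  proof
    show "g ` ?S \<subseteq> {1..w}\<times>{1..h}" using gV z1 unfolding zero_forcing_set_def by blast
    show "\<forall>v\<in>{1..w}\<times>{1..h}. filled ({1..w}\<times>{1..h}) (hprod_E path_E {w} path_E) (g ` ?S) v"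
    proof
      fix v assume "v \<in> {1..w}\<times>{1..h}"
      then obtain u where u: "u \<in> {1..w}\<times>{1..h}" "v = g u" using gV by blast
      show "filled ({1..w}\<times>{1..h}) (hprod_E path_E {w} path_E) (g ` ?S) v"
        using transfer[OF comb_all[OF assms(1) u(1)] u(1) gV gE] u(2) by blast
    qed
  qed
  have c2: "card (g ` ?S) \<le> nat \<lceil>real h / 2\<rceil>"
  proof -
    have "finite ?S" using z1 unfolding zero_forcing_set_def by (meson finite_SigmaI finite_atLeastAtMost finite_subset)
    then have "card (g ` ?S) \<le> card ?S" by (rule card_image_le)
    then show ?thesis using cardS[of w h] by linarith
  qed
  have P1: "\<forall>U. (U = {1} \<or> U = {w}) \<longrightarrow>
            zero_forcing_number (hprod_V (path_V w) (path_V h)) (hprod_E path_E U path_E)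
              \<le> nat \<lceil>real h / 2\<rceil>"
  proof (intro allI impI)
    fix U :: "nat set" assume "U = {1} \<or> U = {w}"
    then show "zero_forcing_number (hprod_V (path_V w) (path_V h)) (hprod_E path_E U path_E)
              \<le> nat \<lceil>real h / 2\<rceil>"
    proof
      assume "U = {1}"
      then show ?thesis using zfn_le[OF z1] cardS[of w h] VV by simp
    next
      assume "U = {w}"
      then show ?thesis using zfn_le[OF z2] c2 VV by simp
    qed
  qed
  have P2: "zero_forcing_number (hprod_V (path_V w) (path_V h)) (hprod_E path_E {i} path_E) \<le> h" for i
  proof -
    have "zero_forcing_set ({1..w}\<times>{1..h}) (hprod_E path_E {i} path_E) ({1}\<times>{1..h})"
      unfolding zero_forcing_set_def using assms col by auto
    from zfn_le[OF this] show ?thesis using VV by simp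
  qed
  show ?thesis using P1 P2 by blast
qed

end
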